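(* Let $A\in\mathbb R^{n\times n}$ be symmetric with bandwidth $b$, where $1<b<n$, and let $Q\in\mathbb R^{2n\times 2n}$ be the orthogonal matrix produced by Algorithm 2 (described in the context) applied to $A$. Then for every $1\le k<n$, the matrices $Q(1{:}k,\,k{+}1{:}n)$ and $Q(n{+}1{:}n{+}k,\,k{+}1{:}n)$ have rank at most $2b$.
   Context: A matrix has bandwidth $b$ if its $(i,j)$ entry vanishes whenever $|i-j|>b$. A Givens rotation on rows $p\ne q$ is an orthogonal matrix $G\in\mathbb R^{2n\times 2n}$ equal to the identity except in the entries $(p,p),(p,q),(q,p),(q,q)$, which form a $2\times2$ rotation $\begin{bmatrix}c&s\\-s&c\end{bmatrix}$, $c^2+s^2=1$. "Rotate rows $p,q$ to annihilate $R(q,j)$" means: choose such a $G$ for which $(G^{T}R)(q,j)=0$ and then update $R\leftarrow G^{T}R$, $Q\leftarrow QG$. Algorithm 2: Initialize $Q=I_{2n}$, $R=\begin{bmatrix}A\\ I_n\end{bmatrix}\in\mathbb R^{2n\times n}$. First rotate rows $1,n+1$ to annihilate $R(n+1,1)$; then for $j=2,\dots,\min\{n,b+1\}$ rotate rows $1,j$ to annihilate $R(j,1)$. Then for $i=2,\dots,n$: (a) rotate rows $n+1,n+i$ to annihilate $R(n+i,i)$; (b) for $j=i+1,\dots,\min\{n,b+i-1\}$, rotate rows $n+j,n+i$ to annihilate $R(n+i,j)$; (c) rotate rows $i,n+1$ to annihilate $R(n+1,i)$; (d) if $i<n$, for $j=i+1,\dots,\min\{n,b+i\}$ rotate rows $i,j$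 to annihilate $R(j,i)$. On output $QR=\begin{bmatrix}A\\ I\end{bmatrix}$ with $R$ upper triangular. Notation $Q(a{:}b,c{:}d)$ denotes the submatrix with rows $a,\dots,b$ and columns $c,\dots,d$. *)

theory Defs
  imports "Jordan_Normal_Form.DL_Rank_Submatrix"
begin

(* Matrices are Jordan_Normal_Form matrices (0-based indices).  All index
   data of Algorithm 2 below is written 1-based, as in the paper; the entry
   (i,j) in 1-based notation is  M $$ (i-1, j-1). *)

definition bandwidth_le :: "real mat \<Rightarrow> nat \<Rightarrow> bool" where
  "bandwidth_le A b \<longleftrightarrow>
     (\<forall>i<dim_row A. \<forall>j<dim_col A. (if i \<le> j then j - i else i - j) > b \<longrightarrow> A $$ (i,j) = 0)"

definition givens_mat :: "nat \<Rightarrow> nat \<Rightarrow> nat \<Rightarrow> real \<Rightarrow> real \<Rightarrow> real mat" where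
  "givens_mat N p q c s = mat N N (\<lambda>(i,j).
      if i = p - 1 \<and> j = p - 1 then c
      else if i = p - 1 \<and> j = q - 1 then s
      else if i = q - 1 \<and> j = p - 1 then - s
      else if i = q - 1 \<and> j = q - 1 then c
      else if i = j then 1 else 0)"

definition is_givens :: "nat \<Rightarrow> nat \<Rightarrow> nat \<Rightarrow> real mat \<Rightarrow> bool" where
  "is_givens N p q G \<longleftrightarrow> p \<noteq> q \<and> 1 \<le> p \<and> p \<le> N \<and> 1 \<le> q \<and> q \<le> N \<and>
     (\<exists>c s. c\<^sup>2 + s\<^sup>2 = 1 \<and> G = givens_mat N p q c s)"

(* A step (p, q, j): rotate rows p, q to annihilate R(q, j)  (1-based) *)
definition alg2_steps :: "nat \<Rightarrow> nat \<Rightarrow> (nat \<times> nat \<times> nat) list" where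
  "alg2_steps n b =
     [(1, n + 1, 1)] @
     map (\<lambda>j. (1, j, 1)) [2..<min n (b + 1) + 1] @
     concat (map (\<lambda>i.
        [(n + 1, n + i, i)] @
        map (\<lambda>j. (n + j, n + i, j)) [i + 1..<min n (b + i - 1) + 1] @
        [(i, n + 1, i)] @
        (if i < n then map (\<lambda>j. (i, j, i)) [i + 1..<min n (b + i) + 1] else []))
      [2..<n + 1])"

inductive alg2_run :: "nat \<Rightarrow> (nat \<times> nat \<times> nat) list \<Rightarrow> real mat \<Rightarrow> real mat \<Rightarrow> real mat \<Rightarrow> real mat \<Rightarrow> bool"
  for N where
  run_nil: "alg2_run N [] R Q R Q"
| run_cons: "is_givens N p q G \<Longrightarrow> (transpose_mat G * R) $$ (q - 1, j - 1) = 0 \<Longrightarrow>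
         alg2_run N st (transpose_mat G * R) (Q * G) R' Q' \<Longrightarrow>
         alg2_run N ((p, q, j) # st) R Q R' Q'"

end

theory Submission
  imports Defs
begin


lemma givens_carrier: "givens_mat N p q c s \<in> carrier_mat N N"
  unfolding givens_mat_def by auto

lemma givens_entry:
  assumes "p \<noteq> q" "1 \<le> p" "1 \<le> q" "l < N" "i < N"
  shows "givens_mat N p q c s $$ (l,i) = (if l = p-1 then (if i = p-1 then c else if i = q-1 then s else 0)
     else if l = q-1 then (if i = p-1 then -s else if i = q-1 then c else 0) else if l = i then 1 else 0)"
proof -
  have "p - 1 \<noteq> q - 1" using assms by auto
  then show ?thesis using assms(4,5) unfolding givens_mat_def by (simp split: if_split)
qed

lemma givens_T_mult:
  assumes G: "G = givens_mat N p q c s" and pq: "p \<noteq> q" "1 \<le> p" "p \<le> N" "1 \<le> q" "q \<le> N"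
    and R: "R \<in> carrier_mat N m" and i: "i < N" and j: "j < m"
  shows "(transpose_mat G * R) $$ (i,j) =
    (if i = p-1 then c * R$$(p-1,j) - s * R$$(q-1,j)
     else if i = q-1 then s * R$$(p-1,j) + c * R$$(q-1,j) else R$$(i,j))"
proof -
  have pq': "p - 1 \<noteq> q - 1" "p - 1 < N" "q - 1 < N" using pq by auto
  have Gc: "G \<in> carrier_mat N N" unfolding G givens_mat_def by auto
  have "(transpose_mat G * R) $$ (i,j) = (\<Sum>l<N. G $$ (l,i) * R $$ (l,j))"
    using Gc R i j by (simp add: scalar_prod_def lessThan_atLeast0 mult.commute)
  also have "\<dots> = (\<Sum>l<N. (if l = p-1 then G$$(p-1,i) * R$$(p-1,j) else 0)
      + (if l = q-1 then G$$(q-1,i) * R$$(q-1,j) else 0)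
      + (if l = i \<and> i \<noteq> p-1 \<and> i \<noteq> q-1 then R$$(i,j) else 0))"
  proof (rule sum.cong[OF refl])
    fix l assume l: "l \<in> {..<N}"
    then have l: "l < N" by auto
    show "G $$ (l,i) * R $$ (l,j) = (if l = p-1 then G$$(p-1,i) * R$$(p-1,j) else 0)
      + (if l = q-1 then G$$(q-1,i) * R$$(q-1,j) else 0)
      + (if l = i \<and> i \<noteq> p-1 \<and> i \<noteq> q-1 then R$$(i,j) else 0)"
      using pq' l i
      by (cases "l = p-1"; cases "l = q-1"; cases "l = i"; simp add: G givens_entry[OF pq(1,2,4)])
  qed
  also have "\<dots> = G$$(p-1,i) * R$$(p-1,j) + G$$(q-1,i) * R$$(q-1,j)
      + (if i \<noteq> p-1 \<and> i \<noteq> q-1 then R$$(i,j) else 0)"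
    using pq' i by (simp add: sum.distrib)
  also have "\<dots> = (if i = p-1 then c * R$$(p-1,j) - s * R$$(q-1,j)
     else if i = q-1 then s * R$$(p-1,j) + c * R$$(q-1,j) else R$$(i,j))"
    using pq' unfolding G givens_entry[OF pq(1,2,4) pq'(2) i] givens_entry[OF pq(1,2,4) pq'(3) i]
    by (cases "i = p-1"; cases "i = q-1"; simp)
  finally show ?thesis .
qed

lemma givens_orth:
  assumes "is_givens N p q G"
  shows "transpose_mat G * G = 1\<^sub>m N" "G * transpose_mat G = 1\<^sub>m N" "G \<in> carrier_mat N N"
proof -
  obtain c s where cs: "c\<^sup>2 + s\<^sup>2 = 1" and G: "G = givens_mat N p q c s" and pq: "p \<noteq> q" "1 \<le> p" "p \<le> N" "1 \<le> q" "q \<le> N"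
    using assms unfolding is_givens_def by auto
  show Gc: "G \<in> carrier_mat N N" using G givens_carrier by auto
  show 1: "transpose_mat G * G = 1\<^sub>m N"
  proof (rule eq_matI)
    fix i j assume ij: "i < dim_row (1\<^sub>m N)" "j < dim_col (1\<^sub>m N)"
    then have ij: "i < N" "j < N" by auto
    have pq': "p - 1 \<noteq> q - 1" "p - 1 < N" "q - 1 < N" using pq by auto
    have e1: "G $$ (p-1, j) = (if j = p-1 then c else if j = q-1 then s else 0)"
      using ij pq' unfolding G by (simp add: givens_entry[OF pq(1,2,4)])
    have e2: "G $$ (q-1, j) = (if j = p-1 then -s else if j = q-1 then c else 0)"
      using ij pq' unfolding G by (simp add: givens_entry[OF pq(1,2,4)])
    have e3: "i \<noteq> p-1 \<Longrightarrow> i \<noteq> q-1 \<Longrightarrow> G $$ (i, j) = (if i = j then 1 else 0)"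
      using ij pq' unfolding G by (simp add: givens_entry[OF pq(1,2,4)])
    have cs': "c * c + s * s = 1" using cs by (simp add: power2_eq_square)
    show "(transpose_mat G * G) $$ (i, j) = 1\<^sub>m N $$ (i, j)"
    proof -
      have "i = p-1 \<or> i = q-1 \<or> (i \<noteq> p-1 \<and> i \<noteq> q-1)" by blast
      moreover have "j = p-1 \<or> j = q-1 \<or> (j \<noteq> p-1 \<and> j \<noteq> q-1)" by blast
      ultimately show ?thesis
        unfolding givens_T_mult[OF G pq Gc ij]
        using ij pq'(1) cs' e1 e2 e3 by (auto simp: algebra_simps)
    qed
  qed (use Gc in auto)
  show "G * transpose_mat G = 1\<^sub>m N"
    by (rule mat_mult_left_right_inverse[OF transpose_carrier_mat[THEN iffD2, OF Gc] Gc 1])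
qed

lemma run_inv:
  assumes "alg2_run N st R Q R' Q'"
    and "R \<in> carrier_mat N m" "Q \<in> carrier_mat N N" "transpose_mat Q * Q = 1\<^sub>m N" "Q * R = X"
  shows "R' \<in> carrier_mat N m \<and> Q' \<in> carrier_mat N N \<and> transpose_mat Q' * Q' = 1\<^sub>m N \<and> Q' * R' = X"
  using assms
proof (induction rule: alg2_run.induct)
  case (run_nil R Q)
  then show ?case by auto
next
  case (run_cons p q G R j st Q R' Q')
  note o = givens_orth[OF run_cons.hyps(1)]
  have Gc: "G \<in> carrier_mat N N" by fact
  have GT: "transpose_mat G \<in> carrier_mat N N" using transpose_carrier_mat Gc by blast
  have QT: "transpose_mat Q \<in> carrier_mat N N" using run_cons.prems(2) transpose_carrier_mat by blast
  have R1: "transpose_mat G * R \<in> carrier_mat N m" using GT run_cons.prems(1) by (rule mult_carrier_mat)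
  have Q1: "Q * G \<in> carrier_mat N N" using run_cons.prems(2) Gc by (rule mult_carrier_mat)
  have "transpose_mat (Q * G) * (Q * G) = (transpose_mat G * transpose_mat Q) * (Q * G)"
    unfolding transpose_mult[OF run_cons.prems(2) Gc] ..
  also have "\<dots> = transpose_mat G * (transpose_mat Q * (Q * G))"
    by (rule assoc_mult_mat[OF GT QT Q1])
  also have "transpose_mat Q * (Q * G) = (transpose_mat Q * Q) * G"
    by (rule assoc_mult_mat[symmetric, OF QT run_cons.prems(2) Gc])
  also have "\<dots> = G" using run_cons.prems(3) Gc by simp
  also have "transpose_mat G * G = 1\<^sub>m N" using o by simp
  finally have O1: "transpose_mat (Q * G) * (Q * G) = 1\<^sub>m N" .
  have "(Q * G) * (transpose_mat G * R) = Q * (G * (transpose_mat G * R))"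
    by (rule assoc_mult_mat[OF run_cons.prems(2) Gc R1])
  also have "G * (transpose_mat G * R) = (G * transpose_mat G) * R"
    by (rule assoc_mult_mat[symmetric, OF Gc GT run_cons.prems(1)])
  also have "\<dots> = R" using o(2) run_cons.prems(1) by simp
  also have "Q * R = X" by fact
  finally have X1: "(Q * G) * (transpose_mat G * R) = X" .
  show ?case using run_cons.IH[OF R1 Q1 O1 X1] .
qed




definition conf :: "nat \<Rightarrow> real mat \<Rightarrow> (nat \<Rightarrow> nat \<Rightarrow> bool) \<Rightarrow> bool" where
  "conf n R Z \<longleftrightarrow> R \<in> carrier_mat (2*n) n \<and>
     (\<forall>r c. 1 \<le> r \<longrightarrow> r \<le> 2*n \<longrightarrow> 1 \<le> c \<longrightarrow> c \<le> n \<longrightarrow> Z r c \<longrightarrow> R $$ (r-1, c-1) = 0)"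

lemma conf_weaken:
  assumes "conf n R Z" "\<And>r c. 1 \<le> r \<Longrightarrow> r \<le> 2*n \<Longrightarrow> 1 \<le> c \<Longrightarrow> c \<le> n \<Longrightarrow> Z' r c \<Longrightarrow> Z r c"
  shows "conf n R Z'"
  using assms unfolding conf_def by blast

lemma step_conf:
  assumes run: "alg2_run (2*n) [(p,q,j)] R Q R1 Q1" and cf: "conf n R Z" and j: "1 \<le> j" "j \<le> n"
    and imp: "\<And>r c. 1 \<le> r \<Longrightarrow> r \<le> 2*n \<Longrightarrow> 1 \<le> c \<Longrightarrow> c \<le> n \<Longrightarrow> Z' r c \<Longrightarrow>
        (if r = p \<or> r = q then (Z p c \<and> Z q c) \<or> (r = q \<and> c = j) else Z r c)"
  shows "conf n R1 Z'"
proof -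
  from run obtain G where G: "is_givens (2*n) p q G" and z: "(transpose_mat G * R) $$ (q - 1, j - 1) = 0"
    and r1: "alg2_run (2*n) [] (transpose_mat G * R) (Q * G) R1 Q1"
    by (cases rule: alg2_run.cases) auto
  from r1 have R1: "R1 = transpose_mat G * R" by (cases rule: alg2_run.cases) auto
  obtain c s where G': "G = givens_mat (2*n) p q c s" and pq: "p \<noteq> q" "1 \<le> p" "p \<le> 2*n" "1 \<le> q" "q \<le> 2*n"
    using G unfolding is_givens_def by auto
  have Rc: "R \<in> carrier_mat (2*n) n" using cf unfolding conf_def by auto
  have Gc: "G \<in> carrier_mat (2*n) (2*n)" using givens_orth(3)[OF G] .
  have R1c: "R1 \<in> carrier_mat (2*n) n" unfolding R1 using Gc Rc by auto
  note form = givens_T_mult[OF G' pq Rc]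
  have zero: "\<And>r c. 1 \<le> r \<Longrightarrow> r \<le> 2*n \<Longrightarrow> 1 \<le> c \<Longrightarrow> c \<le> n \<Longrightarrow> Z r c \<Longrightarrow> R $$ (r-1, c-1) = 0"
    using cf unfolding conf_def by blast
  show ?thesis unfolding conf_def
  proof (intro conjI R1c allI impI)
    fix r c' assume r: "1 \<le> r" "r \<le> 2*n" and c: "1 \<le> c'" "c' \<le> n" and Zr: "Z' r c'"
    have i: "r - 1 < 2*n" "c' - 1 < n" using r c by auto
    note I = imp[OF r c Zr]
    show "R1 $$ (r - 1, c' - 1) = 0"
    proof (cases "r = p \<or> r = q")
      case True
      show ?thesis
      proof (cases "r = q \<and> c' = j")
        case True
        then show ?thesis using z R1 by simp
      next
        case False
        with I \<open>r = p \<or> r = q\<close> have "Z p c' \<and> Z q c'" by auto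
        then have "R $$ (p-1, c'-1) = 0" "R $$ (q-1, c'-1) = 0" using zero pq c by auto
        then show ?thesis unfolding R1 form[OF i] using \<open>r = p \<or> r = q\<close> by auto
      qed
    next
      case False
      with I have "Z r c'" by auto
      then have "R $$ (r-1, c'-1) = 0" using zero r c by auto
      moreover have "r - 1 \<noteq> p - 1" "r - 1 \<noteq> q - 1" using False r pq by auto
      ultimately show ?thesis unfolding R1 form[OF i] by auto
    qed
  qed
qed

lemma run_append:
  assumes "alg2_run N (xs @ ys) R Q R' Q'"
  shows "\<exists>R'' Q''. alg2_run N xs R Q R'' Q'' \<and> alg2_run N ys R'' Q'' R' Q'"
  using assms
proof (induction xs arbitrary: R Q)
  case Nil
  then show ?case by (auto intro: alg2_run.intros)
next
  case (Cons a xs)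
  obtain p q j where a: "a = (p,q,j)" by (cases a) auto
  from Cons.prems[unfolded a] obtain G where G: "is_givens N p q G"
    "(transpose_mat G * R) $$ (q - 1, j - 1) = 0"
    "alg2_run N (xs @ ys) (transpose_mat G * R) (Q * G) R' Q'"
    by (cases rule: alg2_run.cases) auto
  from Cons.IH[OF G(3)] obtain R'' Q'' where
    "alg2_run N xs (transpose_mat G * R) (Q * G) R'' Q''" "alg2_run N ys R'' Q'' R' Q'" by auto
  then show ?case using alg2_run.run_cons[OF G(1) G(2)] a by blast
qed

lemma run_loop:
  assumes "alg2_run N (concat (map g [a..<c])) R Q R' Q'" "a \<le> c" "P a R"
    "\<And>m R Q R1 Q1. a \<le> m \<Longrightarrow> m < c \<Longrightarrow> P m R \<Longrightarrow> alg2_run N (g m) R Q R1 Q1 \<Longrightarrow> P (Suc m) R1"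
  shows "P c R'"
  using assms
proof (induction c arbitrary: R' Q')
  case 0
  then have "alg2_run N [] R Q R' Q'" by simp
  then have "R' = R" by (cases rule: alg2_run.cases) auto
  then show ?case using 0 by simp
next
  case (Suc c)
  show ?case
  proof (cases "a = Suc c")
    case True
    then have "alg2_run N [] R Q R' Q'" using Suc.prems by simp
    then have "R' = R" by (cases rule: alg2_run.cases) auto
    then show ?thesis using Suc True by simp
  next
    case False
    then have ac: "a \<le> c" using Suc by auto
    have "alg2_run N (concat (map g [a..<c]) @ g c) R Q R' Q'" using Suc.prems(1) ac by simp
    from run_append[OF this] obtain R'' Q'' where
      r1: "alg2_run N (concat (map g [a..<c])) R Q R'' Q''" and r2: "alg2_run N (g c) R'' Q'' R' Q'" by auto
    have "P c R''" using Suc.IH[OF r1 ac Suc.prems(3)] Suc.prems(4) by auto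
    then show ?thesis using Suc.prems(4)[OF ac _ _ r2] by auto
  qed
qed

lemma run_loop1:
  assumes "alg2_run N (map f [a..<c]) R Q R' Q'" "a \<le> c" "P a R"
    "\<And>m R Q R1 Q1. a \<le> m \<Longrightarrow> m < c \<Longrightarrow> P m R \<Longrightarrow> alg2_run N [f m] R Q R1 Q1 \<Longrightarrow> P (Suc m) R1"
  shows "P c R'"
proof -
  have "map f [a..<c] = concat (map (\<lambda>m. [f m]) [a..<c])" by (induction "[a..<c]") auto
  then show ?thesis using run_loop[of N "\<lambda>m. [f m]" a c R Q R' Q' P] assms by auto
qed




definition Z0 :: "nat \<Rightarrow> nat \<Rightarrow> nat \<Rightarrow> nat \<Rightarrow> bool" where
  "Z0 n b r c \<longleftrightarrow> (if r \<le> n then (c + b < r \<or> r + b < c) else c \<noteq> r - n)"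

definition ZS :: "nat \<Rightarrow> nat \<Rightarrow> nat \<Rightarrow> nat \<Rightarrow> nat \<Rightarrow> bool" where
  "ZS n b i r c \<longleftrightarrow> (if r < i then c < r
     else if r \<le> n then (c < i \<or> c + b < r \<or> r + b < c)
     else if r = n+1 then (c < i \<or> i + b < c + 1)
     else if r < n + i then True
     else (c + n < r \<or> (r - n < c \<and> i + b < c + 2)))"

definition Z1 :: "nat \<Rightarrow> nat \<Rightarrow> nat \<Rightarrow> nat \<Rightarrow> nat \<Rightarrow> bool" where
  "Z1 n b m r c \<longleftrightarrow> (if r = 1 then m + b \<le> c
     else if r < m then (c < 2 \<or> r + b < c)
     else if r \<le> n then (c + b < r \<or> r + b < c)
     else if r = n+1 then (c < 2 \<or> b + 1 < c)
     else c \<noteq> r - n)"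

definition Zb :: "nat \<Rightarrow> nat \<Rightarrow> nat \<Rightarrow> nat \<Rightarrow> nat \<Rightarrow> nat \<Rightarrow> bool" where
  "Zb n b i m r c \<longleftrightarrow> (if r < i then c < r
     else if r \<le> n then (c < i \<or> c + b < r \<or> r + b < c)
     else if r = n+1 then (c < i \<or> i + b < c + 1)
     else if r < n + i then True
     else if r = n + i then (c < m \<or> i + b < c + 1)
     else (c + n < r \<or> (r - n < c \<and> i + b < c + 1)))"

definition Zd :: "nat \<Rightarrow> nat \<Rightarrow> nat \<Rightarrow> nat \<Rightarrow> nat \<Rightarrow> nat \<Rightarrow> bool" where
  "Zd n b i m r c \<longleftrightarrow> (if r < i then c < r
     else if r = i then (c < i \<or> m + b \<le> c)
     else if r < m then (c < i + 1 \<or> r + b < c)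
     else if r \<le> n then (c < i \<or> c + b < r \<or> r + b < c)
     else if r = n+1 then (c < i + 1 \<or> i + b < c)
     else if r \<le> n + i then True
     else (c + n < r \<or> (r - n < c \<and> i + b < c + 1)))"

lemma stage1:
  assumes run: "alg2_run (2*n) ([(1, n + 1, 1)] @ map (\<lambda>j. (1, j, 1)) [2..<min n (b + 1) + 1]) R Q R' Q'"
    and cf: "conf n R (Z0 n b)" and nb: "1 < b" "b < n"
  shows "conf n R' (ZS n b 2)"
proof -
  from run_append[OF run] obtain R1 Q1 where r1: "alg2_run (2*n) [(1, n + 1, 1)] R Q R1 Q1"
    and r2: "alg2_run (2*n) (map (\<lambda>j. (1, j, 1)) [2..<min n (b + 1) + 1]) R1 Q1 R' Q'" by auto
  have c1: "conf n R1 (Z1 n b 2)"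
    by (rule step_conf[OF r1 cf], use nb in \<open>auto simp: Z1_def Z0_def split: if_splits\<close>)
  have "conf n R' (Z1 n b (min n (b + 1) + 1))"
  proof (rule run_loop1[where P="\<lambda>m R. conf n R (Z1 n b m)", OF r2 _ c1])
    fix m R Q R1 Q1 assume m: "2 \<le> m" "m < min n (b + 1) + 1" and c: "conf n R (Z1 n b m)"
      and r: "alg2_run (2 * n) [(1, m, 1)] R Q R1 Q1"
    show "conf n R1 (Z1 n b (Suc m))"
      by (rule step_conf[OF r c], use nb m in \<open>auto simp: Z1_def split: if_splits\<close>)
  qed (use nb in auto)
  then show ?thesis
    by (rule conf_weaken, use nb in \<open>auto simp: Z1_def ZS_def split: if_splits\<close>)
qed


definition stage :: "nat \<Rightarrow> nat \<Rightarrow> nat \<Rightarrow> (nat \<times> nat \<times> nat) list" where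
  "stage n b i = [(n + 1, n + i, i)] @
        map (\<lambda>j. (n + j, n + i, j)) [i + 1..<min n (b + i - 1) + 1] @
        [(i, n + 1, i)] @
        (if i < n then map (\<lambda>j. (i, j, i)) [i + 1..<min n (b + i) + 1] else [])"

lemma stage_i:
  assumes run: "alg2_run (2*n) (stage n b i) R Q R' Q'"
    and cf: "conf n R (ZS n b i)" and nb: "1 < b" "b < n" and i: "2 \<le> i" "i \<le> n"
  shows "conf n R' (ZS n b (Suc i))"
proof -
  from run_append[OF run[unfolded stage_def]] obtain R1 Q1 where
    ra: "alg2_run (2*n) [(n + 1, n + i, i)] R Q R1 Q1" and
    rrest: "alg2_run (2*n) (map (\<lambda>j. (n + j, n + i, j)) [i + 1..<min n (b + i - 1) + 1] @
        [(i, n + 1, i)] @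
        (if i < n then map (\<lambda>j. (i, j, i)) [i + 1..<min n (b + i) + 1] else [])) R1 Q1 R' Q'" by blast
  from run_append[OF rrest] obtain R2 Q2 where
    rb: "alg2_run (2*n) (map (\<lambda>j. (n + j, n + i, j)) [i + 1..<min n (b + i - 1) + 1]) R1 Q1 R2 Q2" and
    rrest2: "alg2_run (2*n) ([(i, n + 1, i)] @
        (if i < n then map (\<lambda>j. (i, j, i)) [i + 1..<min n (b + i) + 1] else [])) R2 Q2 R' Q'" by blast
  from run_append[OF rrest2] obtain R3 Q3 where
    rc: "alg2_run (2*n) [(i, n + 1, i)] R2 Q2 R3 Q3" and
    rd: "alg2_run (2*n) (if i < n then map (\<lambda>j. (i, j, i)) [i + 1..<min n (b + i) + 1] else []) R3 Q3 R' Q'"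
    by blast
  have c1: "conf n R1 (Zb n b i (i+1))"
    by (rule step_conf[OF ra cf], use nb i in \<open>auto simp: Zb_def ZS_def split: if_splits\<close>)
  have c2: "conf n R2 (Zb n b i (min n (b + i - 1) + 1))"
  proof (rule run_loop1[where P="\<lambda>m R. conf n R (Zb n b i m)", OF rb _ c1])
    fix m R Q R1 Q1 assume m: "i + 1 \<le> m" "m < min n (b + i - 1) + 1" and c: "conf n R (Zb n b i m)"
      and r: "alg2_run (2 * n) [(n + m, n + i, m)] R Q R1 Q1"
    show "conf n R1 (Zb n b i (Suc m))"
      by (rule step_conf[OF r c], use nb m i in \<open>auto simp: Zb_def split: if_splits\<close>)
  qed (use nb i in auto)
  have c3: "conf n R3 (Zd n b i (i+1))"
    by (rule step_conf[OF rc c2], use nb i in \<open>auto simp: Zb_def Zd_def split: if_splits\<close>)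
  have c4: "conf n R' (Zd n b i (min n (b + i) + 1))"
  proof (cases "i < n")
    case True
    then have rd': "alg2_run (2*n) (map (\<lambda>j. (i, j, i)) [i + 1..<min n (b + i) + 1]) R3 Q3 R' Q'"
      using rd by simp
    show ?thesis
    proof (rule run_loop1[where P="\<lambda>m R. conf n R (Zd n b i m)", OF rd' _ c3])
      fix m R Q R1 Q1 assume m: "i + 1 \<le> m" "m < min n (b + i) + 1" and c: "conf n R (Zd n b i m)"
        and r: "alg2_run (2 * n) [(i, m, i)] R Q R1 Q1"
      show "conf n R1 (Zd n b i (Suc m))"
        by (rule step_conf[OF r c], use nb m i in \<open>auto simp: Zd_def split: if_splits\<close>)
    qed (use nb i True in auto)
  next
    case False
    then have "alg2_run (2*n) [] R3 Q3 R' Q'" using rd by simp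
    then have "R' = R3" by (cases rule: alg2_run.cases) auto
    moreover have "min n (b + i) + 1 = i + 1" using False i by auto
    ultimately show ?thesis using c3 by simp
  qed
  show ?thesis
    by (rule conf_weaken[OF c4], use nb i in \<open>auto simp: Zd_def ZS_def split: if_splits\<close>)
qed




lemma X_entry:
  assumes "A \<in> carrier_mat n n" "i < 2*n" "j < n"
  shows "(A @\<^sub>r 1\<^sub>m n) $$ (i,j) = (if i < n then A $$ (i,j) else if i - n = j then 1 else 0)"
  using assms unfolding append_rows_def by (auto simp: index_mat_four_block)

lemma X_carrier: "A \<in> carrier_mat n n \<Longrightarrow> (A @\<^sub>r 1\<^sub>m n) \<in> carrier_mat (2*n) n"
  using carrier_append_rows[of A n n "1\<^sub>m n" n] by (simp add: mult_2)

lemma conf_init: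
  assumes A: "A \<in> carrier_mat n n" and bw: "bandwidth_le A b"
  shows "conf n (A @\<^sub>r 1\<^sub>m n) (Z0 n b)"
  unfolding conf_def
proof (intro conjI allI impI)
  show "A @\<^sub>r 1\<^sub>m n \<in> carrier_mat (2 * n) n" using X_carrier[OF A] .
  fix r c assume r: "1 \<le> r" "r \<le> 2 * n" and c: "1 \<le> c" "c \<le> n" and z: "Z0 n b r c"
  have e: "(A @\<^sub>r 1\<^sub>m n) $$ (r-1, c-1) = (if r-1 < n then A $$ (r-1,c-1) else if r-1-n = c-1 then 1 else 0)"
    using X_entry[OF A] r c by auto
  show "(A @\<^sub>r 1\<^sub>m n) $$ (r - 1, c - 1) = 0"
  proof (cases "r \<le> n")
    case True
    then have "b < (if r-1 \<le> c-1 then (c-1) - (r-1) else (r-1) - (c-1))" using z r c unfolding Z0_def by auto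
    moreover have "r - 1 < n" "c - 1 < n" using True r c by auto
    moreover have "\<forall>i<n. \<forall>j<n. b < (if i \<le> j then j - i else i - j) \<longrightarrow> A $$ (i, j) = 0"
      using bw A unfolding bandwidth_le_def by auto
    ultimately have "A $$ (r-1,c-1) = 0" by blast
    then show ?thesis using e True r c by auto
  next
    case False
    then show ?thesis using e z r c unfolding Z0_def by auto
  qed
qed

lemma steps_split: "alg2_steps n b = ([(1, n + 1, 1)] @ map (\<lambda>j. (1, j, 1)) [2..<min n (b + 1) + 1])
   @ concat (map (stage n b) [2..<n+1])"
  unfolding alg2_steps_def stage_def by simp

lemma alg_upper:
  assumes A: "A \<in> carrier_mat n n" and bw: "bandwidth_le A b" and nb: "1 < b" "b < n"
    and run: "alg2_run (2 * n) (alg2_steps n b) (A @\<^sub>r 1\<^sub>m n) (1\<^sub>m (2 * n)) R Q"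
  shows "R \<in> carrier_mat (2*n) n \<and> Q \<in> carrier_mat (2*n) (2*n) \<and> transpose_mat Q * Q = 1\<^sub>m (2*n)
    \<and> Q * R = A @\<^sub>r 1\<^sub>m n \<and> (\<forall>i j. i < 2*n \<longrightarrow> j < n \<longrightarrow> j < i \<longrightarrow> R $$ (i,j) = 0)"
proof -
  have inv: "R \<in> carrier_mat (2*n) n \<and> Q \<in> carrier_mat (2*n) (2*n) \<and> transpose_mat Q * Q = 1\<^sub>m (2*n)
    \<and> Q * R = A @\<^sub>r 1\<^sub>m n"
    by (rule run_inv[OF run X_carrier[OF A]], auto simp: X_carrier[OF A] left_mult_one_mat[OF X_carrier[OF A]])
  from run_append[OF run[unfolded steps_split]] obtain R1 Q1 where
    r1: "alg2_run (2*n) ([(1, n + 1, 1)] @ map (\<lambda>j. (1, j, 1)) [2..<min n (b + 1) + 1]) (A @\<^sub>r 1\<^sub>m n) (1\<^sub>m (2 * n)) R1 Q1"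
    and r2: "alg2_run (2*n) (concat (map (stage n b) [2..<n+1])) R1 Q1 R Q" by blast
  have c1: "conf n R1 (ZS n b 2)" using stage1[OF r1 conf_init[OF A bw] nb] .
  have cf: "conf n R (ZS n b (n+1))"
  proof (rule run_loop[where P="\<lambda>i R. conf n R (ZS n b i)", OF r2 _ c1])
    fix m R Q R1 Q1 assume m: "2 \<le> m" "m < n + 1" and c: "conf n R (ZS n b m)"
      and r: "alg2_run (2 * n) (stage n b m) R Q R1 Q1"
    show "conf n R1 (ZS n b (Suc m))" using stage_i[OF r c nb m(1)] m by auto
  qed (use nb in auto)
  have "\<forall>i j. i < 2*n \<longrightarrow> j < n \<longrightarrow> j < i \<longrightarrow> R $$ (i,j) = 0"
  proof (intro allI impI)
    fix i j assume ij: "i < 2*n" "j < n" "j < i"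
    show "R $$ (i,j) = 0"
    proof -
      note True = ij(2)
      have "ZS n b (n+1) (i+1) (j+1)" using ij True unfolding ZS_def by auto
      then show ?thesis using cf ij True unfolding conf_def
        by (metis add_diff_cancel_right' le_add2 less_imp_le_nat Suc_eq_plus1 Suc_leI)
    qed
  qed
  with inv show ?thesis by blast
qed




lemma rank_le_card:
  fixes f g :: "nat \<Rightarrow> nat \<Rightarrow> real"
  assumes "finite S"
  shows "vec_space.rank r (mat r m (\<lambda>(i,c). \<Sum>s\<in>S. f s i * g s c)) \<le> card S"
  using assms
proof (induction S rule: finite_induct)
  case empty
  have e: "mat r m (\<lambda>(i,c). \<Sum>s\<in>{}. f s i * g s c) = 0\<^sub>m r m" by (intro eq_matI) auto
  show ?case by (simp only: e vec_space.rank_0I card.empty le_refl)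
next
  case (insert x S)
  have "mat r m (\<lambda>(i,c). \<Sum>s\<in>insert x S. f s i * g s c) =
        mat r m (\<lambda>(i,c). \<Sum>s\<in>S. f s i * g s c) + mat r m (\<lambda>(i,c). f x i * g x c)"
    using insert by (intro eq_matI) auto
  moreover have "vec_space.rank r (mat r m (\<lambda>(i,c). f x i * g x c)) \<le> 1"
    by (rule vec_space.rank_le_1_product_entries[of _ r m "f x" "g x"]) auto
  moreover have "vec_space.rank r (mat r m (\<lambda>(i,c). \<Sum>s\<in>S. f s i * g s c) + mat r m (\<lambda>(i,c). f x i * g x c))
     \<le> vec_space.rank r (mat r m (\<lambda>(i,c). \<Sum>s\<in>S. f s i * g s c)) + vec_space.rank r (mat r m (\<lambda>(i,c). f x i * g x c))"
    by (rule vec_space.rank_subadditive) auto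
  ultimately show ?case using insert by simp
qed

lemma pick_interval:
  assumes "j < b - a"
  shows "pick {a..<b} j = a + j"
proof -
  have "{x \<in> {a..<b}. x < a + j} = {a..<a+j}" using assms by auto
  then have "card {x \<in> {a..<b}. x < a + j} = j" by simp
  moreover have "a + j \<in> {a..<b}" using assms by auto
  ultimately show ?thesis using pick_card_in_set[of "a+j" "{a..<b}"] by simp
qed

lemma submatrix_interval:
  assumes "Q \<in> carrier_mat N N'" "a \<le> b" "b \<le> N" "c \<le> d" "d \<le> N'"
  shows "submatrix Q {a..<b} {c..<d} = mat (b-a) (d-c) (\<lambda>(i,j). Q $$ (a+i, c+j))"
proof -
  have 1: "{i. i < dim_row Q \<and> i \<in> {a..<b}} = {a..<b}" using assms by auto
  have 2: "{i. i < dim_col Q \<and> i \<in> {c..<d}} = {c..<d}" using assms by auto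
  show ?thesis unfolding submatrix_def 1 2
    by (intro eq_matI) (auto simp: pick_interval)
qed


lemma X_entry':
  assumes "A \<in> carrier_mat n n" "i < 2*n" "j < n"
  shows "(A @\<^sub>r 1\<^sub>m n) $$ (i,j) = (if i < n then A $$ (i,j) else if i - n = j then 1 else 0)"
  using assms unfolding append_rows_def by (auto simp: index_mat_four_block)

lemma X_carrier': "A \<in> carrier_mat n n \<Longrightarrow> (A @\<^sub>r 1\<^sub>m n) \<in> carrier_mat (2*n) n"
  using carrier_append_rows[of A n n "1\<^sub>m n" n] by (simp add: mult_2)

lemma QY_exists:
  fixes A R Q :: "real mat"
  assumes A: "A \<in> carrier_mat n n" and R: "R \<in> carrier_mat (2*n) n" and Q: "Q \<in> carrier_mat (2*n) (2*n)"
    and QR: "Q * R = A @\<^sub>r 1\<^sub>m n"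
    and up: "\<forall>i j. i < 2*n \<longrightarrow> j < n \<longrightarrow> j < i \<longrightarrow> R $$ (i,j) = 0"
  shows "\<exists>Y \<in> carrier_mat n n. \<forall>i c. i < 2*n \<longrightarrow> c < n \<longrightarrow> Q $$ (i,c) = ((A @\<^sub>r 1\<^sub>m n) * Y) $$ (i,c)"
proof -
  define X where "X = A @\<^sub>r 1\<^sub>m n"
  have Xc: "X \<in> carrier_mat (2*n) n" unfolding X_def using X_carrier'[OF A] .
  define R1 where "R1 = mat n n (\<lambda>(i,j). R $$ (i,j))"
  define Qt where "Qt = mat (2*n) n (\<lambda>(i,j). Q $$ (i,j))"
  have R1c: "R1 \<in> carrier_mat n n" unfolding R1_def by auto
  have Qtc: "Qt \<in> carrier_mat (2*n) n" unfolding Qt_def by auto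
  have QtR1: "Qt * R1 = X"
  proof (rule eq_matI)
    fix i j assume ij: "i < dim_row X" "j < dim_col X"
    then have ij: "i < 2*n" "j < n" using Xc by auto
    have "(Qt * R1) $$ (i,j) = (\<Sum>l\<in>{0..<n}. Q $$ (i,l) * R $$ (l,j))"
      using ij Qtc R1c unfolding Qt_def R1_def by (simp add: scalar_prod_def)
    also have "\<dots> = (\<Sum>l\<in>{0..<n}. Q $$ (i,l) * R $$ (l,j)) + (\<Sum>l\<in>{n..<2*n}. Q $$ (i,l) * R $$ (l,j))"
    proof -
      have "(\<Sum>l\<in>{n..<2*n}. Q $$ (i,l) * R $$ (l,j)) = 0"
        using up ij by (intro sum.neutral) auto
      then show ?thesis by simp
    qed
    also have "\<dots> = (\<Sum>l\<in>{0..<2*n}. Q $$ (i,l) * R $$ (l,j))"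
      by (rule sum.atLeastLessThan_concat) auto
    also have "\<dots> = (Q * R) $$ (i,j)" using ij Q R by (simp add: scalar_prod_def)
    finally show "(Qt * R1) $$ (i,j) = X $$ (i,j)" unfolding X_def QR .
  qed (use Xc Qtc R1c in auto)
  have "det R1 \<noteq> 0"
  proof
    assume "det R1 = 0"
    then obtain v where v: "v \<in> carrier_vec n" "v \<noteq> 0\<^sub>v n" "R1 *\<^sub>v v = 0\<^sub>v n"
      using det_0_iff_vec_prod_zero[OF R1c] by auto
    have "X *\<^sub>v v = Qt *\<^sub>v (R1 *\<^sub>v v)" unfolding QtR1[symmetric] using Qtc R1c v by simp
    also have "\<dots> = 0\<^sub>v (2*n)" using v(3) Qtc by (intro eq_vecI) (auto simp: scalar_prod_def)
    finally have Xv: "X *\<^sub>v v = 0\<^sub>v (2*n)" .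
    have "v = 0\<^sub>v n"
    proof (rule eq_vecI)
      fix i assume i: "i < dim_vec (0\<^sub>v n)"
      then have i: "i < n" by simp
      have "(X *\<^sub>v v) $ (n + i) = (\<Sum>l\<in>{0..<n}. X $$ (n+i, l) * v $ l)"
        using Xc v i by (simp add: scalar_prod_def)
      also have "\<dots> = (\<Sum>l\<in>{0..<n}. (if l = i then v $ l else 0))"
        unfolding X_def using X_entry'[OF A] i by (intro sum.cong) auto
      also have "\<dots> = v $ i" using i by simp
      finally show "v $ i = 0\<^sub>v n $ i" using Xv i by simp
    qed (use v in auto)
    then show False using v by simp
  qed
  from det_non_zero_imp_unit[OF R1c this, of "()"]
  obtain Y where Yc: "Y \<in> carrier_mat n n" and RY: "R1 * Y = 1\<^sub>m n"
    unfolding Units_def ring_mat_def by auto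
  have "Qt = Qt * (R1 * Y)" unfolding RY using Qtc by simp
  also have "\<dots> = (Qt * R1) * Y" using Qtc R1c Yc by simp
  also have "\<dots> = X * Y" unfolding QtR1 ..
  finally have QtXY: "Qt = X * Y" .
  show ?thesis
  proof (intro bexI[OF _ Yc] allI impI)
    fix i c assume ic: "i < 2*n" "c < n"
    have "Q $$ (i,c) = Qt $$ (i,c)" unfolding Qt_def using ic by simp
    then show "Q $$ (i,c) = ((A @\<^sub>r 1\<^sub>m n) * Y) $$ (i,c)" unfolding QtXY X_def by simp
  qed
qed


lemma block_inj:
  fixes A11 :: "real mat"
  assumes A: "A11 \<in> carrier_mat k k" and sym: "\<And>i j. i < k \<Longrightarrow> j < k \<Longrightarrow> A11 $$ (i,j) = A11 $$ (j,i)"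
    and w: "w \<in> carrier_vec k" and y: "y \<in> carrier_vec k"
    and eq: "four_block_mat A11 (1\<^sub>m k) (1\<^sub>m k) (-A11) *\<^sub>v (w @\<^sub>v y) = 0\<^sub>v (k+k)"
  shows "w = 0\<^sub>v k \<and> y = 0\<^sub>v k"
proof -
  have f1: "four_block_mat A11 (1\<^sub>m k) (1\<^sub>m k) (-A11) *\<^sub>v (w @\<^sub>v y)
     = (A11 *\<^sub>v w + 1\<^sub>m k *\<^sub>v y) @\<^sub>v (1\<^sub>m k *\<^sub>v w + (-A11) *\<^sub>v y)"
    by (rule four_block_mat_mult_vec[OF A _ _ _ w y]) (use A in auto)
  have f2: "0\<^sub>v (k+k) = 0\<^sub>v k @\<^sub>v (0\<^sub>v k :: real vec)" by (intro eq_vecI) auto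
  have "(A11 *\<^sub>v w + 1\<^sub>m k *\<^sub>v y) @\<^sub>v (1\<^sub>m k *\<^sub>v w + (-A11) *\<^sub>v y) = 0\<^sub>v k @\<^sub>v 0\<^sub>v k"
    using eq f1 f2 by simp
  then have e: "A11 *\<^sub>v w + 1\<^sub>m k *\<^sub>v y = 0\<^sub>v k" "1\<^sub>m k *\<^sub>v w + (-A11) *\<^sub>v y = 0\<^sub>v k"
    using append_vec_eq[of "A11 *\<^sub>v w + 1\<^sub>m k *\<^sub>v y" k "0\<^sub>v k"] A w y by auto
  have e1: "(\<Sum>l<k. A11 $$ (i,l) * w $ l) + y $ i = 0" if i: "i < k" for i
  proof -
    have "(A11 *\<^sub>v w + 1\<^sub>m k *\<^sub>v y) $ i = 0" using e(1) i by simp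
    then show ?thesis using A w y i by (simp add: scalar_prod_def lessThan_atLeast0)
  qed
  have e2: "w $ i = (\<Sum>l<k. A11 $$ (i,l) * y $ l)" if i: "i < k" for i
  proof -
    have "(1\<^sub>m k *\<^sub>v w + (-A11) *\<^sub>v y) $ i = 0" using e(2) i by simp
    then show ?thesis
      using A w y i by (simp add: scalar_prod_def lessThan_atLeast0 sum_negf)
  qed
  have S1: "(\<Sum>i<k. y $ i * y $ i) = - (\<Sum>i<k. \<Sum>l<k. y $ i * (A11 $$ (i,l) * w $ l))"
  proof -
    have "(\<Sum>i<k. y $ i * y $ i) = (\<Sum>i<k. y $ i * (- (\<Sum>l<k. A11 $$ (i,l) * w $ l)))"
      using e1 by (intro sum.cong) (auto simp: add_eq_0_iff)
    also have "\<dots> = - (\<Sum>i<k. \<Sum>l<k. y $ i * (A11 $$ (i,l) * w $ l))"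
      by (simp add: sum_distrib_left sum_negf)
    finally show ?thesis .
  qed
  have S2: "(\<Sum>l<k. w $ l * w $ l) = (\<Sum>i<k. \<Sum>l<k. y $ i * (A11 $$ (i,l) * w $ l))"
  proof -
    have "(\<Sum>l<k. w $ l * w $ l) = (\<Sum>l<k. w $ l * (\<Sum>i<k. A11 $$ (l,i) * y $ i))"
      using e2 by (intro sum.cong) auto
    also have "\<dots> = (\<Sum>l<k. \<Sum>i<k. y $ i * (A11 $$ (i,l) * w $ l))"
      unfolding sum_distrib_left by (intro sum.cong refl) (auto simp: sym)
    also have "\<dots> = (\<Sum>i<k. \<Sum>l<k. y $ i * (A11 $$ (i,l) * w $ l))"
      by (rule sum.swap)
    finally show ?thesis .
  qed
  have tot: "(\<Sum>i<k. y $ i * y $ i) + (\<Sum>l<k. w $ l * w $ l) = 0" using S1 S2 by simp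
  have ny: "(\<Sum>i<k. y $ i * y $ i) \<ge> 0" and nw: "(\<Sum>l<k. w $ l * w $ l) \<ge> 0"
    by (auto intro: sum_nonneg)
  have zy: "(\<Sum>i<k. y $ i * y $ i) = 0" and zw: "(\<Sum>l<k. w $ l * w $ l) = 0" using tot ny nw by linarith+
  have "\<forall>i\<in>{..<k}. y $ i * y $ i = 0" using zy sum_nonneg_eq_0_iff[of "{..<k}" "\<lambda>i. y $ i * y $ i"] by auto
  then have "y = 0\<^sub>v k" using y by (intro eq_vecI) auto
  moreover have "\<forall>i\<in>{..<k}. w $ i * w $ i = 0" using zw sum_nonneg_eq_0_iff[of "{..<k}" "\<lambda>i. w $ i * w $ i"] by auto
  then have "w = 0\<^sub>v k" using w by (intro eq_vecI) auto
  ultimately show ?thesis by simp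
qed


lemma sum_split_at:
  fixes f :: "nat \<Rightarrow> real"
  assumes "k \<le> n"
  shows "(\<Sum>l<n. f l) = (\<Sum>l<k. f l) + (\<Sum>l\<in>{k..<n}. f l)"
proof -
  have "(\<Sum>l\<in>{0..<n}. f l) = (\<Sum>l\<in>{0..<k}. f l) + (\<Sum>l\<in>{k..<n}. f l)"
    using sum.atLeastLessThan_concat[of 0 k n f] assms by simp
  then show ?thesis by (simp add: lessThan_atLeast0)
qed

lemma rank_bound:
  fixes A Y :: "real mat"
  assumes A: "A \<in> carrier_mat n n" and Y: "Y \<in> carrier_mat n n"
    and sym: "\<And>i j. i < n \<Longrightarrow> j < n \<Longrightarrow> A $$ (i,j) = A $$ (j,i)"
    and band: "\<And>i j. i < n \<Longrightarrow> j < n \<Longrightarrow> i + b < j \<Longrightarrow> A $$ (i,j) = 0"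
    and E2: "\<And>j c. j < c \<Longrightarrow> c < n \<Longrightarrow> Y $$ (j,c) + (\<Sum>i<n. A $$ (j,i) * (\<Sum>l<n. A $$ (i,l) * Y $$ (l,c))) = 0"
    and k: "1 \<le> k" "k < n"
  shows "vec_space.rank k (mat k (n-k) (\<lambda>(i,c). \<Sum>l<n. A $$ (i,l) * Y $$ (l,k+c))) \<le> 2*b \<and>
         vec_space.rank k (mat k (n-k) (\<lambda>(i,c). Y $$ (i,k+c))) \<le> 2*b"
proof -
  define AY where "AY i c = (\<Sum>l<n. A $$ (i,l) * Y $$ (l,c))" for i c
  define A11 where "A11 = mat k k (\<lambda>(i,j). A $$ (i,j))"
  define M where "M = four_block_mat A11 (1\<^sub>m k) (1\<^sub>m k) (-A11)"
  have A11c: "A11 \<in> carrier_mat k k" unfolding A11_def by auto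
  have Mc: "M \<in> carrier_mat (k+k) (k+k)" unfolding M_def using A11c by auto
  have sym11: "\<And>i j. i < k \<Longrightarrow> j < k \<Longrightarrow> A11 $$ (i,j) = A11 $$ (j,i)"
    unfolding A11_def using sym k by auto
  have "det M \<noteq> 0"
  proof
    assume "det M = 0"
    then obtain v where v: "v \<in> carrier_vec (k+k)" "v \<noteq> 0\<^sub>v (k+k)" "M *\<^sub>v v = 0\<^sub>v (k+k)"
      using det_0_iff_vec_prod_zero[OF Mc] by auto
    have vv: "vec_first v k @\<^sub>v vec_last v k = v" using v(1) by simp
    have "vec_first v k = 0\<^sub>v k \<and> vec_last v k = 0\<^sub>v k"
      by (rule block_inj[OF A11c sym11]) (use v vv in \<open>auto simp: M_def\<close>)
    then have "v = 0\<^sub>v k @\<^sub>v 0\<^sub>v k" using vv by simp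
    also have "\<dots> = 0\<^sub>v (k+k)" by (intro eq_vecI) auto
    finally show False using v by simp
  qed
  from det_non_zero_imp_unit[OF Mc this, of "()"]
  obtain Minv where Minvc: "Minv \<in> carrier_mat (k+k) (k+k)" and MM: "Minv * M = 1\<^sub>m (k+k)"
    unfolding Units_def ring_mat_def by auto
  define t where "t c = vec k (\<lambda>i. -(\<Sum>l\<in>{k..<n}. A $$ (i,l) * AY l c)) @\<^sub>v
      vec k (\<lambda>i. \<Sum>l\<in>{k..<n}. A $$ (i,l) * Y $$ (l,c))" for c
  define z where "z c = vec k (\<lambda>i. AY i c) @\<^sub>v vec k (\<lambda>i. Y $$ (i,c))" for c
  have zc: "z c \<in> carrier_vec (k+k)" for c unfolding z_def by auto
  have Mz: "M *\<^sub>v z c = t c" if c: "k \<le> c" "c < n" for c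
  proof -
    have "M *\<^sub>v z c = (A11 *\<^sub>v vec k (\<lambda>i. AY i c) + 1\<^sub>m k *\<^sub>v vec k (\<lambda>i. Y $$ (i,c))) @\<^sub>v
        (1\<^sub>m k *\<^sub>v vec k (\<lambda>i. AY i c) + (-A11) *\<^sub>v vec k (\<lambda>i. Y $$ (i,c)))"
      unfolding M_def z_def by (rule four_block_mat_mult_vec[OF A11c]) (use A11c in auto)
    also have "A11 *\<^sub>v vec k (\<lambda>i. AY i c) + 1\<^sub>m k *\<^sub>v vec k (\<lambda>i. Y $$ (i,c))
       = vec k (\<lambda>i. -(\<Sum>l\<in>{k..<n}. A $$ (i,l) * AY l c))"
    proof (rule eq_vecI)
      fix i assume i: "i < dim_vec (vec k (\<lambda>i. -(\<Sum>l\<in>{k..<n}. A $$ (i,l) * AY l c)))"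
      then have i: "i < k" by simp
      have e: "Y $$ (i,c) + (\<Sum>l<n. A $$ (i,l) * AY l c) = 0"
        using E2[of i c] i c unfolding AY_def by auto
      have "(\<Sum>l<n. A $$ (i,l) * AY l c) = (\<Sum>l<k. A $$ (i,l) * AY l c) + (\<Sum>l\<in>{k..<n}. A $$ (i,l) * AY l c)"
        by (rule sum_split_at) (use k in auto)
      moreover have "(A11 *\<^sub>v vec k (\<lambda>i. AY i c) + 1\<^sub>m k *\<^sub>v vec k (\<lambda>i. Y $$ (i,c))) $ i
          = (\<Sum>l<k. A $$ (i,l) * AY l c) + Y $$ (i,c)"
        using i A11c k unfolding A11_def by (simp add: scalar_prod_def lessThan_atLeast0)
      ultimately show "(A11 *\<^sub>v vec k (\<lambda>i. AY i c) + 1\<^sub>m k *\<^sub>v vec k (\<lambda>i. Y $$ (i,c))) $ i =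
         vec k (\<lambda>i. -(\<Sum>l\<in>{k..<n}. A $$ (i,l) * AY l c)) $ i" using e i by simp
    qed (use A11c in auto)
    also have "1\<^sub>m k *\<^sub>v vec k (\<lambda>i. AY i c) + (-A11) *\<^sub>v vec k (\<lambda>i. Y $$ (i,c))
       = vec k (\<lambda>i. \<Sum>l\<in>{k..<n}. A $$ (i,l) * Y $$ (l,c))"
    proof (rule eq_vecI)
      fix i assume i: "i < dim_vec (vec k (\<lambda>i. \<Sum>l\<in>{k..<n}. A $$ (i,l) * Y $$ (l,c)))"
      then have i: "i < k" by simp
      have "AY i c = (\<Sum>l<k. A $$ (i,l) * Y $$ (l,c)) + (\<Sum>l\<in>{k..<n}. A $$ (i,l) * Y $$ (l,c))"
        unfolding AY_def by (rule sum_split_at) (use k in auto)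
      moreover have "(1\<^sub>m k *\<^sub>v vec k (\<lambda>i. AY i c) + (-A11) *\<^sub>v vec k (\<lambda>i. Y $$ (i,c))) $ i
          = AY i c - (\<Sum>l<k. A $$ (i,l) * Y $$ (l,c))"
        using i A11c k unfolding A11_def by (simp add: scalar_prod_def lessThan_atLeast0 sum_negf)
      ultimately show "(1\<^sub>m k *\<^sub>v vec k (\<lambda>i. AY i c) + (-A11) *\<^sub>v vec k (\<lambda>i. Y $$ (i,c))) $ i =
         vec k (\<lambda>i. \<Sum>l\<in>{k..<n}. A $$ (i,l) * Y $$ (l,c)) $ i" using i by simp
    qed (use A11c in auto)
    finally show ?thesis unfolding t_def .
  qed
  have zt: "z c = Minv *\<^sub>v t c" if c: "k \<le> c" "c < n" for c
  proof -
    have "Minv *\<^sub>v t c = Minv *\<^sub>v (M *\<^sub>v z c)" using Mz[OF c] by simp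
    also have "\<dots> = (Minv * M) *\<^sub>v z c" using Minvc Mc zc by simp
    also have "\<dots> = z c" unfolding MM using zc by simp
    finally show ?thesis by simp
  qed
  define S where "S = {s. s < k+k \<and> (if s < k then k \<le> s + b else k \<le> (s-k) + b)}"
  have Ssub: "S \<subseteq> {0..<k+k}" unfolding S_def by auto
  have finS: "finite S" using Ssub finite_subset by blast
  have tz: "t c $ s = 0" if c: "k \<le> c" "c < n" and s: "s < k+k" "s \<notin> S" for c s
  proof (cases "s < k")
    case True
    then have sb: "s + b < k" using s unfolding S_def by auto
    have "(\<Sum>l\<in>{k..<n}. A $$ (s,l) * AY l c) = 0"
      using band sb True k by (intro sum.neutral) auto
    then show ?thesis unfolding t_def using True by simp
  next
    case False
    then have sb: "(s-k) + b < k" using s unfolding S_def by auto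
    have "(\<Sum>l\<in>{k..<n}. A $$ (s-k,l) * Y $$ (l,c)) = 0"
      using band sb False k s by (intro sum.neutral) auto
    then show ?thesis unfolding t_def using False s by simp
  qed
  have zS: "z c $ i = (\<Sum>s\<in>S. Minv $$ (i,s) * t c $ s)" if c: "k \<le> c" "c < n" and i: "i < k+k" for c i
  proof -
    have tc: "t c \<in> carrier_vec (k+k)" unfolding t_def by auto
    have "z c $ i = (\<Sum>s\<in>{0..<k+k}. Minv $$ (i,s) * t c $ s)"
      unfolding zt[OF c] using Minvc tc i by (simp add: scalar_prod_def)
    also have "\<dots> = (\<Sum>s\<in>S. Minv $$ (i,s) * t c $ s)"
      by (rule sum.mono_neutral_right[OF _ Ssub]) (use tz[OF c] in auto)
    finally show ?thesis .
  qed
  have cardS: "card S \<le> 2*b"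
  proof -
    have "S \<subseteq> {k-b..<k} \<union> {k+k-b..<k+k}" unfolding S_def by auto
    then have "card S \<le> card ({k-b..<k} \<union> {k+k-b..<k+k})" by (intro card_mono) auto
    also have "\<dots> \<le> card {k-b..<k} + card {k+k-b..<k+k}" by (rule card_Un_le)
    also have "\<dots> \<le> 2*b" by simp
    finally show ?thesis .
  qed
  have m1: "mat k (n-k) (\<lambda>(i,c). \<Sum>l<n. A $$ (i,l) * Y $$ (l,k+c))
      = mat k (n-k) (\<lambda>(i,c). \<Sum>s\<in>S. Minv $$ (i,s) * t (k+c) $ s)"
  proof (rule eq_matI)
    fix i c assume ic: "i < dim_row (mat k (n-k) (\<lambda>(i,c). \<Sum>s\<in>S. Minv $$ (i,s) * t (k+c) $ s))"
      "c < dim_col (mat k (n-k) (\<lambda>(i,c). \<Sum>s\<in>S. Minv $$ (i,s) * t (k+c) $ s))"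
    then have ic: "i < k" "c < n - k" by auto
    have "z (k+c) $ i = AY i (k+c)" unfolding z_def using ic by simp
    then show "mat k (n-k) (\<lambda>(i,c). \<Sum>l<n. A $$ (i,l) * Y $$ (l,k+c)) $$ (i,c) =
       mat k (n-k) (\<lambda>(i,c). \<Sum>s\<in>S. Minv $$ (i,s) * t (k+c) $ s) $$ (i,c)"
      using zS[of "k+c" i] ic unfolding AY_def by auto
  qed auto
  have m2: "mat k (n-k) (\<lambda>(i,c). Y $$ (i,k+c))
      = mat k (n-k) (\<lambda>(i,c). \<Sum>s\<in>S. Minv $$ (k+i,s) * t (k+c) $ s)"
  proof (rule eq_matI)
    fix i c assume ic: "i < dim_row (mat k (n-k) (\<lambda>(i,c). \<Sum>s\<in>S. Minv $$ (k+i,s) * t (k+c) $ s))"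
      "c < dim_col (mat k (n-k) (\<lambda>(i,c). \<Sum>s\<in>S. Minv $$ (k+i,s) * t (k+c) $ s))"
    then have ic: "i < k" "c < n - k" by auto
    have "z (k+c) $ (k+i) = Y $$ (i, k+c)" unfolding z_def using ic by simp
    then show "mat k (n-k) (\<lambda>(i,c). Y $$ (i,k+c)) $$ (i,c) =
       mat k (n-k) (\<lambda>(i,c). \<Sum>s\<in>S. Minv $$ (k+i,s) * t (k+c) $ s) $$ (i,c)"
      using zS[of "k+c" "k+i"] ic by auto
  qed auto
  have r1: "vec_space.rank k (mat k (n-k) (\<lambda>(i,c). \<Sum>s\<in>S. Minv $$ (i,s) * t (k+c) $ s)) \<le> card S"
    using rank_le_card[OF finS, of k "n-k" "\<lambda>s i. Minv $$ (i,s)" "\<lambda>s c. t (k+c) $ s"] by simp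
  have r2: "vec_space.rank k (mat k (n-k) (\<lambda>(i,c). \<Sum>s\<in>S. Minv $$ (k+i,s) * t (k+c) $ s)) \<le> card S"
    using rank_le_card[OF finS, of k "n-k" "\<lambda>s i. Minv $$ (k+i,s)" "\<lambda>s c. t (k+c) $ s"] by simp
  show ?thesis unfolding m1 m2 using r1 r2 cardS by linarith
qed




theorem theorem4p3:
  fixes A :: "real mat" and n b :: nat and R Q :: "real mat"
  assumes "A \<in> carrier_mat n n"
    and "transpose_mat A = A"
    and "bandwidth_le A b"
    and "1 < b" and "b < n"
    and "alg2_run (2 * n) (alg2_steps n b) (A @\<^sub>r 1\<^sub>m n) (1\<^sub>m (2 * n)) R Q"
  shows "\<forall>k. 1 \<le> k \<and> k < n \<longrightarrow>
           vec_space.rank k (submatrix Q {0..<k} {k..<n}) \<le> 2 * b \<and>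
           vec_space.rank k (submatrix Q {n..<n + k} {k..<n}) \<le> 2 * b"
proof -
  note A = assms(1)
  define X where "X = A @\<^sub>r 1\<^sub>m n"
  have Xc: "X \<in> carrier_mat (2*n) n" unfolding X_def using X_carrier'[OF A] .
  from alg_upper[OF A assms(3) assms(4) assms(5) assms(6)]
  have Rc: "R \<in> carrier_mat (2*n) n" and Qc: "Q \<in> carrier_mat (2*n) (2*n)"
    and QQ: "transpose_mat Q * Q = 1\<^sub>m (2*n)" and QR: "Q * R = X"
    and up: "\<forall>i j. i < 2*n \<longrightarrow> j < n \<longrightarrow> j < i \<longrightarrow> R $$ (i,j) = 0"
    unfolding X_def by auto
  from QY_exists[OF A Rc Qc QR[unfolded X_def] up] obtain Y where Yc: "Y \<in> carrier_mat n n"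
    and QY: "\<And>i c. i < 2*n \<Longrightarrow> c < n \<Longrightarrow> Q $$ (i,c) = (X * Y) $$ (i,c)" unfolding X_def by auto
  have sym: "\<And>i j. i < n \<Longrightarrow> j < n \<Longrightarrow> A $$ (i,j) = A $$ (j,i)"
  proof -
    fix i j assume "i < n" "j < n"
    then have "transpose_mat A $$ (i,j) = A $$ (j,i)" using A by simp
    then show "A $$ (i,j) = A $$ (j,i)" using assms(2) by simp
  qed
  have band: "\<And>i j. i < n \<Longrightarrow> j < n \<Longrightarrow> i + b < j \<Longrightarrow> A $$ (i,j) = 0"
  proof -
    fix i j assume ij: "i < n" "j < n" "i + b < j"
    then have "b < (if i \<le> j then j - i else i - j)" by auto
    then show "A $$ (i,j) = 0" using assms(3) A ij unfolding bandwidth_le_def by auto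
  qed
  have XY1: "Q $$ (i,c) = (\<Sum>l<n. A $$ (i,l) * Y $$ (l,c))" if ic: "i < n" "c < n" for i c
  proof -
    have "Q $$ (i,c) = (\<Sum>l\<in>{0..<n}. X $$ (i,l) * Y $$ (l,c))"
      using QY[of i c] ic Xc Yc by (simp add: scalar_prod_def)
    also have "\<dots> = (\<Sum>l<n. A $$ (i,l) * Y $$ (l,c))"
      unfolding lessThan_atLeast0 X_def using X_entry'[OF A] ic by (intro sum.cong) auto
    finally show ?thesis .
  qed
  have XY2: "Q $$ (n+i,c) = Y $$ (i,c)" if ic: "i < n" "c < n" for i c
  proof -
    have "Q $$ (n+i,c) = (\<Sum>l\<in>{0..<n}. X $$ (n+i,l) * Y $$ (l,c))"
      using QY[of "n+i" c] ic Xc Yc by (simp add: scalar_prod_def)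
    also have "\<dots> = (\<Sum>l\<in>{0..<n}. if l = i then Y $$ (l,c) else 0)"
      unfolding X_def using X_entry'[OF A] ic by (intro sum.cong) auto
    also have "\<dots> = Y $$ (i,c)" using ic by simp
    finally show ?thesis .
  qed
  have QtX: "transpose_mat Q * X = R"
  proof -
    have "transpose_mat Q * X = transpose_mat Q * (Q * R)" unfolding QR ..
    also have "\<dots> = (transpose_mat Q * Q) * R"
      by (rule assoc_mult_mat[symmetric]) (use Qc Rc in auto)
    also have "\<dots> = R" unfolding QQ using Rc by simp
    finally show ?thesis .
  qed
  have E2: "Y $$ (j,c) + (\<Sum>i<n. A $$ (j,i) * (\<Sum>l<n. A $$ (i,l) * Y $$ (l,c))) = 0"
    if jc: "j < c" "c < n" for j c
  proof -
    have "0 = R $$ (c,j)" using up jc by auto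
    also have "\<dots> = (\<Sum>r\<in>{0..<2*n}. Q $$ (r,c) * X $$ (r,j))"
      unfolding QtX[symmetric] using Qc Xc jc by (simp add: scalar_prod_def)
    also have "\<dots> = (\<Sum>r\<in>{0..<n}. Q $$ (r,c) * X $$ (r,j)) + (\<Sum>r\<in>{n..<2*n}. Q $$ (r,c) * X $$ (r,j))"
      by (rule sum.atLeastLessThan_concat[symmetric]) auto
    also have "(\<Sum>r\<in>{0..<n}. Q $$ (r,c) * X $$ (r,j)) = (\<Sum>i\<in>{0..<n}. A $$ (j,i) * (\<Sum>l<n. A $$ (i,l) * Y $$ (l,c)))"
    proof (rule sum.cong[OF refl])
      fix r assume r: "r \<in> {0..<n}"
      have "X $$ (r,j) = A $$ (j,r)" unfolding X_def using X_entry'[OF A, of r j] r jc sym by auto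
      then show "Q $$ (r,c) * X $$ (r,j) = A $$ (j,r) * (\<Sum>l<n. A $$ (r,l) * Y $$ (l,c))"
        using XY1[of r c] r jc by simp
    qed
    also have "(\<Sum>i\<in>{0..<n}. A $$ (j,i) * (\<Sum>l<n. A $$ (i,l) * Y $$ (l,c))) = (\<Sum>i<n. A $$ (j,i) * (\<Sum>l<n. A $$ (i,l) * Y $$ (l,c)))"
      by (simp add: lessThan_atLeast0)
    also have "(\<Sum>r\<in>{n..<2*n}. Q $$ (r,c) * X $$ (r,j)) = (\<Sum>r\<in>{n..<2*n}. if r = n + j then Q $$ (r,c) else 0)"
      unfolding X_def using X_entry'[OF A] jc by (intro sum.cong) auto
    also have "\<dots> = Q $$ (n+j,c)" using jc by simp
    also have "\<dots> = Y $$ (j,c)" using XY2 jc by simp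
    finally show ?thesis by simp
  qed
  show ?thesis
  proof (intro allI impI)
    fix k assume k: "1 \<le> k \<and> k < n"
    have s1: "submatrix Q {0..<k} {k..<n} = mat k (n-k) (\<lambda>(i,c). \<Sum>l<n. A $$ (i,l) * Y $$ (l,k+c))"
    proof -
      have "submatrix Q {0..<k} {k..<n} = mat (k-0) (n-k) (\<lambda>(i,j). Q $$ (0+i, k+j))"
        by (rule submatrix_interval[OF Qc]) (use k in auto)
      then show ?thesis using k by (auto intro!: eq_matI simp: XY1)
    qed
    have s2: "submatrix Q {n..<n+k} {k..<n} = mat k (n-k) (\<lambda>(i,c). Y $$ (i,k+c))"
    proof -
      have "submatrix Q {n..<n+k} {k..<n} = mat (n+k-n) (n-k) (\<lambda>(i,j). Q $$ (n+i, k+j))"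
        by (rule submatrix_interval[OF Qc]) (use k in auto)
      then show ?thesis using k by (auto intro!: eq_matI simp: XY2)
    qed
    show "vec_space.rank k (submatrix Q {0..<k} {k..<n}) \<le> 2 * b \<and>
           vec_space.rank k (submatrix Q {n..<n + k} {k..<n}) \<le> 2 * b"
      unfolding s1 s2 using rank_bound[OF A Yc sym band E2] k by auto
  qed
qed


end
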